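(* Let $G$ be a graph. Then \[\chi(G) \leq \frac{1}{2} \left(\omega(G) + \Delta(G) + 1 \right) + \frac{5\kappa(\overline{G}) - \eta(G)}{4}.\]
   Context: All graphs are finite and simple with non-empty vertex set. $\chi$ is the chromatic number, $\omega$ the clique number, $\Delta$ the maximum degree. $\overline{G}$ is the complement of $G$, and $\kappa(\overline{G})$ is its vertex connectivity: the minimum size of a set $K$ of vertices with $\overline{G}-K$ disconnected, or $|G|-1$ if $\overline{G}$ is complete. The chromatic excess of $G$ is $\eta(G) = \max_{H} \left(|H| - 3\chi(H)\right)$, where the maximum ranges over all induced subgraphs $H$ of $G$ with non-empty vertex set and $|H|$ is the number of vertices of $H$. *)

theory Defs
  imports Complex_Main
begin

text \<open>A finite simple graph: non-empty finite vertex set V, and a symmetric,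
irreflexive adjacency relation E (only its restriction to V matters).\<close>
definition simple_graph :: "'a set \<Rightarrow> ('a \<Rightarrow> 'a \<Rightarrow> bool) \<Rightarrow> bool" where
  "simple_graph V E \<longleftrightarrow> finite V \<and> V \<noteq> {} \<and>
     (\<forall>x\<in>V. \<forall>y\<in>V. E x y \<longrightarrow> E y x) \<and> (\<forall>x\<in>V. \<not> E x x)"

definition proper_colouring :: "'a set \<Rightarrow> ('a \<Rightarrow> 'a \<Rightarrow> bool) \<Rightarrow> nat \<Rightarrow> ('a \<Rightarrow> nat) \<Rightarrow> bool" where
  "proper_colouring S E k f \<longleftrightarrow>
     (\<forall>x\<in>S. f x < k) \<and> (\<forall>x\<in>S. \<forall>y\<in>S. E x y \<longrightarrow> f x \<noteq> f y)"

definition chromatic_number :: "'a set \<Rightarrow> ('a \<Rightarrow> 'a \<Rightarrow> bool) \<Rightarrow> nat" where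
  "chromatic_number S E = (LEAST k. \<exists>f. proper_colouring S E k f)"

definition is_clique :: "'a set \<Rightarrow> ('a \<Rightarrow> 'a \<Rightarrow> bool) \<Rightarrow> 'a set \<Rightarrow> bool" where
  "is_clique V E C \<longleftrightarrow> C \<subseteq> V \<and> (\<forall>x\<in>C. \<forall>y\<in>C. x \<noteq> y \<longrightarrow> E x y)"

definition clique_number :: "'a set \<Rightarrow> ('a \<Rightarrow> 'a \<Rightarrow> bool) \<Rightarrow> nat" where
  "clique_number V E = Max {card C | C. is_clique V E C}"

definition degree :: "'a set \<Rightarrow> ('a \<Rightarrow> 'a \<Rightarrow> bool) \<Rightarrow> 'a \<Rightarrow> nat" where
  "degree V E v = card {u\<in>V. E v u}"

definition max_degree :: "'a set \<Rightarrow> ('a \<Rightarrow> 'a \<Rightarrow> bool) \<Rightarrow> nat" where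
  "max_degree V E = Max (degree V E ` V)"

definition compl_adj :: "('a \<Rightarrow> 'a \<Rightarrow> bool) \<Rightarrow> 'a \<Rightarrow> 'a \<Rightarrow> bool" where
  "compl_adj E x y \<longleftrightarrow> x \<noteq> y \<and> \<not> E x y"

definition is_complete :: "'a set \<Rightarrow> ('a \<Rightarrow> 'a \<Rightarrow> bool) \<Rightarrow> bool" where
  "is_complete V E \<longleftrightarrow> (\<forall>x\<in>V. \<forall>y\<in>V. x \<noteq> y \<longrightarrow> E x y)"

definition connected_in :: "'a set \<Rightarrow> ('a \<Rightarrow> 'a \<Rightarrow> bool) \<Rightarrow> bool" where
  "connected_in S E \<longleftrightarrow>
     (\<forall>x\<in>S. \<forall>y\<in>S. (\<lambda>u v. u \<in> S \<and> v \<in> S \<and> E u v)\<^sup>*\<^sup>* x y)"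

definition vertex_connectivity :: "'a set \<Rightarrow> ('a \<Rightarrow> 'a \<Rightarrow> bool) \<Rightarrow> nat" where
  "vertex_connectivity V E =
     (if is_complete V E then card V - 1
      else Min {card K | K. K \<subseteq> V \<and> \<not> connected_in (V - K) E})"

definition chromatic_excess :: "'a set \<Rightarrow> ('a \<Rightarrow> 'a \<Rightarrow> bool) \<Rightarrow> int" where
  "chromatic_excess V E =
     Max {int (card S) - 3 * int (chromatic_number S E) | S. S \<subseteq> V \<and> S \<noteq> {}}"

end

theory Submission
  imports Defs
begin


lemma sg_sub:
  assumes "simple_graph S E" "T \<subseteq> S" "T \<noteq> {}"
  shows "simple_graph T E"
  using assms unfolding simple_graph_def by (meson finite_subset subsetD)

lemma sg_sym: "simple_graph S E \<Longrightarrow> x \<in> S \<Longrightarrow> y \<in> S \<Longrightarrow> E x y \<Longrightarrow> E y x"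
  unfolding simple_graph_def by blast

lemma sg_irr: "simple_graph S E \<Longrightarrow> x \<in> S \<Longrightarrow> \<not> E x x"
  unfolding simple_graph_def by blast

lemma sg_fin: "simple_graph S E \<Longrightarrow> finite S"
  unfolding simple_graph_def by blast

lemma sg_ne: "simple_graph S E \<Longrightarrow> S \<noteq> {}"
  unfolding simple_graph_def by blast

lemma degree_mono: "finite S \<Longrightarrow> T \<subseteq> S \<Longrightarrow> degree T E v \<le> degree S E v"
  unfolding degree_def by (rule card_mono) auto

lemma greedy:
  assumes "finite S" "\<forall>x\<in>S. \<forall>y\<in>S. E x y \<longrightarrow> E y x" "\<forall>x\<in>S. \<not> E x x"
    "\<forall>v\<in>S. degree S E v \<le> d"
  shows "\<exists>f. proper_colouring S E (Suc d) f"
  using assms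
proof (induct S rule: finite_induct)
  case empty
  then show ?case by (auto simp: proper_colouring_def)
next
  case (insert x F)
  have symF: "\<forall>x\<in>F. \<forall>y\<in>F. E x y \<longrightarrow> E y x" using insert.prems(1) by blast
  have irrF: "\<forall>x\<in>F. \<not> E x x" using insert.prems(2) by blast
  have degF: "\<forall>v\<in>F. degree F E v \<le> d"
  proof
    fix v assume "v \<in> F"
    have "degree F E v \<le> degree (insert x F) E v"
      using degree_mono[of "insert x F" F E v] insert.hyps(1) by blast
    thus "degree F E v \<le> d" using insert.prems(3) \<open>v \<in> F\<close> by force
  qed
  obtain f where f: "proper_colouring F E (Suc d) f"
    using insert.hyps(3)[OF symF irrF degF] by blast
  define N where "N = {u\<in>F. E x u}"
  have "N \<subseteq> {u \<in> insert x F. E x u}" unfolding N_def by auto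
  hence "card N \<le> degree (insert x F) E x" unfolding degree_def
    by (intro card_mono) (auto simp: insert.hyps)
  hence cN: "card N \<le> d" using insert.prems(3) by auto
  have "card (f ` N) \<le> d" using cN card_image_le[of N f] insert.hyps(1) unfolding N_def by fastforce
  hence "\<not> {..<Suc d} \<subseteq> f ` N"
    using card_mono[of "f ` N" "{..<Suc d}"] insert.hyps(1) N_def by fastforce
  then obtain c where c: "c < Suc d" "c \<notin> f ` N" by auto
  define g where "g = f(x := c)"
  have "proper_colouring (insert x F) E (Suc d) g"
    unfolding proper_colouring_def
  proof (intro conjI ballI impI)
    fix y assume "y \<in> insert x F" thus "g y < Suc d"
      using f c unfolding g_def proper_colouring_def by auto
  next
    fix y z assume yz: "y \<in> insert x F" "z \<in> insert x F" "E y z"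
    show "g y \<noteq> g z"
    proof (cases "y = x")
      case True
      hence "z \<noteq> x" using yz insert.prems(2) by auto
      thus ?thesis using True yz c insert.hyps(2) unfolding g_def N_def by auto
    next
      case False
      show ?thesis
      proof (cases "z = x")
        case True
        hence "E x y" using yz False insert.prems(1) by blast
        thus ?thesis using True False yz c unfolding g_def N_def by auto
      next
        case False2: False
        thus ?thesis using False yz f unfolding g_def proper_colouring_def by auto
      qed
    qed
  qed
  thus ?case by blast
qed

lemma sg_greedy:
  assumes "simple_graph S E" "\<forall>v\<in>S. degree S E v \<le> d"
  shows "\<exists>f. proper_colouring S E (Suc d) f"
  using greedy[of S E d] assms unfolding simple_graph_def by blast

lemma degree_le_card: "finite S \<Longrightarrow> degree S E v \<le> card S"
  unfolding degree_def by (rule card_mono) auto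

lemma chi_ex:
  assumes "finite S" "\<forall>x\<in>S. \<forall>y\<in>S. E x y \<longrightarrow> E y x" "\<forall>x\<in>S. \<not> E x x"
  shows "\<exists>f. proper_colouring S E (chromatic_number S E) f"
proof -
  have "\<exists>f. proper_colouring S E (Suc (card S)) f"
  proof -
    have "\<forall>v\<in>S. degree S E v \<le> card S" using degree_le_card[OF assms(1)] by blast
    thus ?thesis using greedy[of S E "card S"] assms by blast
  qed
  hence "\<exists>k f. proper_colouring S E k f" by blast
  thus ?thesis unfolding chromatic_number_def by (rule LeastI_ex)
qed

lemma sg_chi_ex: "simple_graph S E \<Longrightarrow> \<exists>f. proper_colouring S E (chromatic_number S E) f"
  using chi_ex unfolding simple_graph_def by blast

lemma chi_le: "proper_colouring S E k f \<Longrightarrow> chromatic_number S E \<le> k"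
  unfolding chromatic_number_def by (rule Least_le) blast

lemma proper_sub: "proper_colouring S E k f \<Longrightarrow> T \<subseteq> S \<Longrightarrow> proper_colouring T E k f"
  unfolding proper_colouring_def by blast

lemma chi_mono: "simple_graph S E \<Longrightarrow> T \<subseteq> S \<Longrightarrow> chromatic_number T E \<le> chromatic_number S E"
  using sg_chi_ex chi_le proper_sub by metis

lemma chi_pos: "simple_graph S E \<Longrightarrow> chromatic_number S E \<ge> 1"
proof (rule ccontr)
  assume a: "simple_graph S E" "\<not> chromatic_number S E \<ge> 1"
  hence "chromatic_number S E = 0" by simp
  then obtain f where "proper_colouring S E 0 f" using sg_chi_ex[OF a(1)] by metis
  moreover obtain x where "x \<in> S" using sg_ne[OF a(1)] by blast
  ultimately show False unfolding proper_colouring_def by blast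
qed

lemma chi_empty: "chromatic_number {} E = 0"
  using chi_le[of "{}" E 0 "\<lambda>_. 0"] unfolding proper_colouring_def by simp

lemma chi_le_Delta: "simple_graph S E \<Longrightarrow> chromatic_number S E \<le> Suc (max_degree S E)"
proof -
  assume a: "simple_graph S E"
  have "\<forall>v\<in>S. degree S E v \<le> max_degree S E"
    using sg_fin[OF a] unfolding max_degree_def by simp
  then obtain f where "proper_colouring S E (Suc (max_degree S E)) f"
    using sg_greedy[OF a] by blast
  thus ?thesis by (rule chi_le)
qed

lemma chi_insert:
  assumes sg: "simple_graph (insert x S) E" and ne: "S \<noteq> {}"
  shows "chromatic_number (insert x S) E \<le> Suc (chromatic_number S E)"
proof -
  have sgS: "simple_graph S E" using sg_sub[OF sg _ ne] by blast
  then obtain f where f: "proper_colouring S E (chromatic_number S E) f" using sg_chi_ex by blast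
  have lt: "\<And>w. w \<in> S \<Longrightarrow> f w < chromatic_number S E" using f unfolding proper_colouring_def by blast
  have fp: "\<And>a b. a \<in> S \<Longrightarrow> b \<in> S \<Longrightarrow> E a b \<Longrightarrow> f a \<noteq> f b" using f unfolding proper_colouring_def by blast
  show ?thesis
  proof (cases "x \<in> S")
    case True thus ?thesis by (simp add: insert_absorb)
  next
    case False
    define g where "g = f(x := chromatic_number S E)"
    have "proper_colouring (insert x S) E (Suc (chromatic_number S E)) g"
      unfolding proper_colouring_def
    proof (intro conjI ballI impI)
      fix y assume "y \<in> insert x S" thus "g y < Suc (chromatic_number S E)"
        using lt[of y] unfolding g_def by (cases "y = x") auto
    next
      fix y z assume yz: "y \<in> insert x S" "z \<in> insert x S" "E y z"
      show "g y \<noteq> g z"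
      proof (cases "y = x")
        case True
        show ?thesis
        proof (cases "z = x")
          case True
          thus ?thesis using \<open>y = x\<close> yz sg_irr[OF sg, of x] by simp
        next
          case False
          hence "z \<in> S" using yz by simp
          thus ?thesis using lt[of z] False \<open>y = x\<close> unfolding g_def by simp
        qed
      next
        case F: False
        hence yS: "y \<in> S" using yz by simp
        show ?thesis
        proof (cases "z = x")
          case True
          thus ?thesis using lt[OF yS] F unfolding g_def by simp
        next
          case False
          hence "z \<in> S" using yz by simp
          thus ?thesis using fp[OF yS _ yz(3)] F False unfolding g_def by simp
        qed
      qed
    qed
    thus ?thesis by (rule chi_le)
  qed
qed

lemma chi_union_le:
  assumes "simple_graph (S \<union> K) E" "S \<noteq> {}"
  shows "chromatic_number (S \<union> K) E \<le> chromatic_number S E + card K"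
  using assms
proof (induct K rule: infinite_finite_induct)
  case (infinite K) thus ?case using sg_fin by blast
next
  case empty thus ?case by simp
next
  case (insert x F)
  have "chromatic_number (S \<union> insert x F) E = chromatic_number (insert x (S \<union> F)) E" by simp
  also have "\<dots> \<le> Suc (chromatic_number (S \<union> F) E)"
    by (rule chi_insert) (use insert.prems in auto)
  also have "\<dots> \<le> Suc (chromatic_number S E + card F)"
    using insert.hyps(3) sg_sub[OF insert.prems(1), of "S \<union> F"] insert.prems(2) by blast
  finally show ?case using insert.hyps by simp
qed

lemma clique_fin: "finite S \<Longrightarrow> finite {card C | C. is_clique S E C}"
proof -
  assume "finite S"
  have "{card C | C. is_clique S E C} \<subseteq> card ` Pow S" unfolding is_clique_def by auto
  thus ?thesis using \<open>finite S\<close> finite_subset by blast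
qed

lemma omega_ge: "finite S \<Longrightarrow> is_clique S E C \<Longrightarrow> card C \<le> clique_number S E"
  unfolding clique_number_def using clique_fin by (intro Max_ge) blast+

lemma omega_ex: "finite S \<Longrightarrow> \<exists>C. is_clique S E C \<and> card C = clique_number S E"
proof -
  assume f: "finite S"
  have "is_clique S E {}" unfolding is_clique_def by simp
  hence ne: "{card C | C. is_clique S E C} \<noteq> {}" by blast
  have "clique_number S E \<in> {card C | C. is_clique S E C}"
    unfolding clique_number_def by (rule Max_in[OF clique_fin[OF f] ne])
  thus ?thesis by auto
qed

lemma omega_mono: "finite S \<Longrightarrow> T \<subseteq> S \<Longrightarrow> clique_number T E \<le> clique_number S E"
proof -
  assume a: "finite S" "T \<subseteq> S"
  have fT: "finite T" using a finite_subset by blast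
  obtain C where C: "is_clique T E C" "card C = clique_number T E" using omega_ex[OF fT] by blast
  hence "is_clique S E C" using a unfolding is_clique_def by blast
  hence "card C \<le> clique_number S E" using omega_ge[OF a(1)] by blast
  thus ?thesis using C by simp
qed

lemma omega_pos: "finite S \<Longrightarrow> x \<in> S \<Longrightarrow> clique_number S E \<ge> 1"
  using omega_ge[of S E "{x}"] unfolding is_clique_def by simp

lemma Delta_ge: "finite S \<Longrightarrow> v \<in> S \<Longrightarrow> degree S E v \<le> max_degree S E"
  unfolding max_degree_def by simp

lemma Delta_ex: "finite S \<Longrightarrow> S \<noteq> {} \<Longrightarrow> \<exists>v\<in>S. degree S E v = max_degree S E"
  unfolding max_degree_def using Max_in[of "degree S E ` S"] by fastforce

lemma Delta_mono: "finite S \<Longrightarrow> T \<subseteq> S \<Longrightarrow> T \<noteq> {} \<Longrightarrow> max_degree T E \<le> max_degree S E"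
proof -
  assume a: "finite S" "T \<subseteq> S" "T \<noteq> {}"
  have fT: "finite T" using a finite_subset by blast
  obtain v where v: "v \<in> T" "degree T E v = max_degree T E" using Delta_ex[OF fT a(3)] by blast
  have "degree T E v \<le> degree S E v" using degree_mono[OF a(1) a(2)] by blast
  also have "\<dots> \<le> max_degree S E" using Delta_ge[OF a(1)] a(2) v(1) by (meson subsetD)
  finally show ?thesis using v by simp
qed

lemma eta_fin: "finite S \<Longrightarrow> finite {int (card H) - 3 * int (chromatic_number H E) | H. H \<subseteq> S \<and> H \<noteq> {}}"
proof -
  assume "finite S"
  have "{int (card H) - 3 * int (chromatic_number H E) | H. H \<subseteq> S \<and> H \<noteq> {}}
     \<subseteq> (\<lambda>H. int (card H) - 3 * int (chromatic_number H E)) ` Pow S" by auto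
  thus ?thesis using \<open>finite S\<close> finite_subset by blast
qed

lemma eta_ge: "finite S \<Longrightarrow> H \<subseteq> S \<Longrightarrow> H \<noteq> {} \<Longrightarrow>
   int (card H) - 3 * int (chromatic_number H E) \<le> chromatic_excess S E"
  unfolding chromatic_excess_def using eta_fin by (intro Max_ge) blast+

lemma eta_ex: "finite S \<Longrightarrow> S \<noteq> {} \<Longrightarrow> \<exists>H. H \<subseteq> S \<and> H \<noteq> {} \<and>
   chromatic_excess S E = int (card H) - 3 * int (chromatic_number H E)"
proof -
  assume f: "finite S" "S \<noteq> {}"
  hence ne: "{int (card H) - 3 * int (chromatic_number H E) | H. H \<subseteq> S \<and> H \<noteq> {}} \<noteq> {}" by blast
  have "chromatic_excess S E \<in> {int (card H) - 3 * int (chromatic_number H E) | H. H \<subseteq> S \<and> H \<noteq> {}}"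
    unfolding chromatic_excess_def by (rule Max_in[OF eta_fin[OF f(1)] ne])
  thus ?thesis by auto
qed



lemma free_colour:
  assumes g: "proper_colouring S E k g" and c: "c < k" and free: "\<forall>x\<in>S. g x \<noteq> c"
  shows "chromatic_number S E < k"
proof -
  define h where "h x = (if g x > c then g x - 1 else g x)" for x
  have "proper_colouring S E (k - 1) h"
    unfolding proper_colouring_def
  proof (intro conjI ballI impI)
    fix x assume "x \<in> S"
    hence "g x < k" "g x \<noteq> c" using g free unfolding proper_colouring_def by auto
    thus "h x < k - 1" using c unfolding h_def by auto
  next
    fix x y assume xy: "x \<in> S" "y \<in> S" "E x y"
    hence "g x \<noteq> g y" "g x \<noteq> c" "g y \<noteq> c" using g free unfolding proper_colouring_def by auto
    thus "h x \<noteq> h y" unfolding h_def by auto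
  qed
  hence "chromatic_number S E \<le> k - 1" by (rule chi_le)
  thus ?thesis using c by linarith
qed

lemma nonnb_card:
  assumes sg: "simple_graph S E" and v: "v \<in> S"
  shows "card {u\<in>S. u \<noteq> v \<and> \<not> E v u} + degree S E v + 1 = card S"
proof -
  have fin: "finite S" using sg_fin[OF sg] .
  have "S = {v} \<union> ({u\<in>S. E v u} \<union> {u\<in>S. u \<noteq> v \<and> \<not> E v u})" using v by auto
  moreover have "card ({v} \<union> ({u\<in>S. E v u} \<union> {u\<in>S. u \<noteq> v \<and> \<not> E v u}))
     = 1 + (card {u\<in>S. E v u} + card {u\<in>S. u \<noteq> v \<and> \<not> E v u})"
    using fin sg_irr[OF sg v]
    by (subst card_Un_disjoint; (subst card_Un_disjoint)?) auto
  ultimately show ?thesis unfolding degree_def by simp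
qed

lemma caseB:
  assumes sg: "simple_graph S E"
  and tri: "\<And>x y z. x\<in>S \<Longrightarrow> y\<in>S \<Longrightarrow> z\<in>S \<Longrightarrow> x\<noteq>y \<Longrightarrow> y\<noteq>z \<Longrightarrow> x\<noteq>z \<Longrightarrow> E x y \<or> E y z \<or> E x z"
  shows "4 * chromatic_number S E \<le> card S + 2 * clique_number S E + max_degree S E + 1"
proof -
  define k where "k = chromatic_number S E"
  have fin: "finite S" using sg_fin[OF sg] .
  have sym: "\<And>a b. a \<in> S \<Longrightarrow> b \<in> S \<Longrightarrow> E a b \<Longrightarrow> E b a" using sg_sym[OF sg] by blast
  have irr: "\<And>a. a \<in> S \<Longrightarrow> \<not> E a a" using sg_irr[OF sg] by blast
  obtain f where f: "proper_colouring S E k f" using sg_chi_ex[OF sg] k_def by blast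
  have lt: "\<And>a. a \<in> S \<Longrightarrow> f a < k" using f unfolding proper_colouring_def by blast
  have fp: "\<And>a b. a \<in> S \<Longrightarrow> b \<in> S \<Longrightarrow> E a b \<Longrightarrow> f a \<noteq> f b" using f unfolding proper_colouring_def by blast
  have free: "False" if "\<forall>x\<in>S. g x < k" "\<forall>x\<in>S. \<forall>y\<in>S. E x y \<longrightarrow> g x \<noteq> g y" "c < k" "\<forall>x\<in>S. g x \<noteq> c" for g c
  proof -
    have "proper_colouring S E k g" using that unfolding proper_colouring_def by blast
    hence "chromatic_number S E < k" using free_colour that(3,4) by blast
    thus False using k_def by simp
  qed
  have cls2: "False" if "x\<in>S" "y\<in>S" "z\<in>S" "x\<noteq>y" "y\<noteq>z" "x\<noteq>z" "f x = f y" "f y = f z" for x y z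
    using tri[OF that(1-6)] fp that by metis
  define U where "U = {x\<in>S. \<forall>y\<in>S. f y = f x \<longrightarrow> y = x}"
  have Uuniq: "\<And>u y. u \<in> U \<Longrightarrow> y \<in> S \<Longrightarrow> f y = f u \<Longrightarrow> y = u" unfolding U_def by blast
  have US: "U \<subseteq> S" unfolding U_def by blast
  have notU: "\<exists>y\<in>S. y \<noteq> x \<and> f y = f x" if "x \<in> S" "x \<notin> U" for x
    using that unfolding U_def by blast
  have B4: "E u v" if uv: "u \<in> U" "v \<in> U" "u \<noteq> v" for u v
  proof (rule ccontr)
    assume nE: "\<not> E u v"
    have uS: "u \<in> S" and vS: "v \<in> S" using uv US by auto
    hence nE2: "\<not> E v u" using nE sym by blast
    define g where "g = f(v := f u)"
    show False
    proof (rule free[of g "f v"])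
      show "\<forall>x\<in>S. g x < k" using lt uS unfolding g_def by auto
      show "f v < k" using lt vS by blast
      show "\<forall>x\<in>S. g x \<noteq> f v" unfolding g_def using Uuniq[OF uv(1)] Uuniq[OF uv(2)] uv(3) vS by auto
      show "\<forall>x\<in>S. \<forall>y\<in>S. E x y \<longrightarrow> g x \<noteq> g y"
      proof (intro ballI impI)
        fix x y assume xy: "x \<in> S" "y \<in> S" "E x y"
        show "g x \<noteq> g y"
          unfolding g_def using xy fp[OF xy] Uuniq[OF uv(1), of x] Uuniq[OF uv(1), of y] nE nE2 irr
          by (cases "x = v"; cases "y = v") auto
      qed
    qed
  qed
  define dbar where "dbar = card S - 1 - max_degree S E"
  have Dle: "max_degree S E + 1 \<le> card S"
  proof -
    obtain v where v: "v \<in> S" "degree S E v = max_degree S E" using Delta_ex[OF fin sg_ne[OF sg]] by blast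
    show ?thesis using nonnb_card[OF sg v(1)] v(2) by linarith
  qed
  have NNc: "card {u\<in>S. u \<noteq> v \<and> \<not> E v u} \<ge> dbar" if "v \<in> S" for v
    using nonnb_card[OF sg that] Delta_ge[OF fin that, of E] unfolding dbar_def by linarith
  have B5: "clique_number S E \<ge> dbar"
  proof -
    obtain v where v: "v \<in> S" using sg_ne[OF sg] by blast
    have "is_clique S E {u\<in>S. u \<noteq> v \<and> \<not> E v u}"
      unfolding is_clique_def
    proof (intro conjI ballI impI)
      fix a b assume ab: "a \<in> {u\<in>S. u \<noteq> v \<and> \<not> E v u}" "b \<in> {u\<in>S. u \<noteq> v \<and> \<not> E v u}" "a \<noteq> b"
      thus "E a b" using tri[of v a b] v by auto
    qed auto
    thus ?thesis using omega_ge[OF fin] NNc[OF v] by (meson le_trans)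
  qed
  define C where "C c = {x\<in>S. f x = c}" for c
  have Sun: "S = (\<Union>c\<in>{..<k}. C c)" unfolding C_def using lt by auto
  have Uun: "U = (\<Union>c\<in>{..<k}. U \<inter> C c)" using Sun US by blast
  have cardS: "card S = (\<Sum>c\<in>{..<k}. card (C c))"
    by (subst Sun, rule card_UN_disjoint) (auto simp: C_def intro: finite_subset[OF _ fin])
  have cardU: "card U = (\<Sum>c\<in>{..<k}. card (U \<inter> C c))"
    by (subst Uun, rule card_UN_disjoint) (auto simp: C_def intro: finite_subset[OF _ fin])
  have each: "card (C c) + card (U \<inter> C c) = 2" if c: "c < k" for c
  proof -
    obtain x where x: "x \<in> S" "f x = c"
    proof (rule ccontr)
      assume "\<not> thesis"
      hence "\<forall>x\<in>S. f x \<noteq> c" using that by blast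
      thus False using free[of f c] lt fp c by blast
    qed
    show ?thesis
    proof (cases "x \<in> U")
      case True
      have un: "\<forall>y\<in>S. f y = c \<longrightarrow> y = x"
      proof (intro ballI impI)
        fix y assume "y \<in> S" "f y = c"
        thus "y = x" using Uuniq[OF True, of y] x(2) by simp
      qed
      have c1: "C c = {x}" unfolding C_def using un x by blast
      hence "U \<inter> C c = {x}" using True by blast
      thus ?thesis using c1 by simp
    next
      case False
      then obtain y where y: "y \<in> S" "y \<noteq> x" "f y = f x" using notU x(1) by blast
      have zz: "z = x \<or> z = y" if "z \<in> S" "f z = c" for z
        using cls2[of x y z] that x y by metis
      hence "C c = {x, y}" using x y unfolding C_def by auto
      moreover have "U \<inter> C c = {}"
      proof (rule ccontr)
        assume "U \<inter> C c \<noteq> {}"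
        then obtain u where u: "u \<in> U" "u \<in> S" "f u = c" unfolding C_def by blast
        have "x = u" using Uuniq[OF u(1) x(1)] u(3) x(2) by simp
        moreover have "y = u" using Uuniq[OF u(1) y(1)] u(3) x(2) y(3) by simp
        ultimately show False using y(2) by simp
      qed
      ultimately show ?thesis using y(2) by simp
    qed
  qed
  have B3: "2 * k = card S + card U"
  proof -
    have "card S + card U = (\<Sum>c\<in>{..<k}. card (C c) + card (U \<inter> C c))"
      using cardS cardU by (simp add: sum.distrib)
    also have "\<dots> = (\<Sum>c\<in>{..<k}. 2)" using each by (intro sum.cong) auto
    finally show ?thesis by simp
  qed
  have Uf: "finite U" using US fin finite_subset by blast
  have B6: "finite W \<Longrightarrow> W \<subseteq> U \<Longrightarrow> card W \<le> dbar \<Longrightarrow> \<exists>Z. Z \<subseteq> S - U \<and> card Z = card W \<and>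
      (\<forall>z\<in>Z. \<forall>a\<in>U \<union> Z. a \<noteq> z \<longrightarrow> E z a) \<and>
      (\<forall>z\<in>Z. \<exists>u\<in>W. \<exists>w\<in>S. w \<noteq> z \<and> f w = f z \<and> \<not> E u w)" for W
  proof (induct W rule: finite_induct)
    case empty
    show ?case by (rule exI[of _ "{}"]) simp
  next
    case (insert u W0)
    have uU: "u \<in> U" and W0U: "W0 \<subseteq> U" using insert.prems by auto
    have uS: "u \<in> S" using uU US by blast
    have cW0: "card W0 < dbar" using insert.prems(2) insert.hyps by simp
    obtain Z0 where Z0: "Z0 \<subseteq> S - U" "card Z0 = card W0"
      "\<forall>z\<in>Z0. \<forall>a\<in>U \<union> Z0. a \<noteq> z \<longrightarrow> E z a"
      "\<forall>z\<in>Z0. \<exists>u\<in>W0. \<exists>w\<in>S. w \<noteq> z \<and> f w = f z \<and> \<not> E u w"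
      using insert.hyps(3) W0U cW0 by auto
    define Nu where "Nu = {w\<in>S. w \<noteq> u \<and> \<not> E u w}"
    have injN: "inj_on f Nu"
    proof (rule inj_onI)
      fix a b assume ab: "a \<in> Nu" "b \<in> Nu" "f a = f b"
      show "a = b"
      proof (rule ccontr)
        assume "a \<noteq> b"
        hence "E u a \<or> E a b \<or> E u b" using tri[of u a b] ab uS unfolding Nu_def by auto
        thus False using ab fp unfolding Nu_def by auto
      qed
    qed
    have "card (f ` Nu) \<ge> dbar" using NNc[OF uS] card_image[OF injN] unfolding Nu_def by simp
    moreover have "card (f ` Z0) \<le> card W0" using Z0(2) card_image_le Z0(1) fin finite_subset
      by (metis Diff_subset)
    ultimately have "\<not> f ` Nu \<subseteq> f ` Z0"
      using cW0 card_mono[of "f ` Z0" "f ` Nu"] Z0(1) fin finite_subset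
      by (metis Diff_subset finite_imageI leD le_trans)
    then obtain w where w: "w \<in> Nu" "f w \<notin> f ` Z0" by blast
    have wS: "w \<in> S" and wu: "w \<noteq> u" and nEuw: "\<not> E u w" using w(1) unfolding Nu_def by auto
    have wnU: "w \<notin> U" using B4[OF uU _ wu[symmetric]] nEuw by blast
    obtain z where z: "z \<in> S" "z \<noteq> w" "f z = f w" using notU[OF wS wnU] by blast
    have zZ0: "z \<notin> Z0" using w(2) z(3) by (metis image_eqI)
    have znU: "z \<notin> U" using Uuniq[of z w] wS z by metis
    have clsw: "\<And>y. y \<in> S \<Longrightarrow> f y = f w \<Longrightarrow> y = w \<or> y = z" using cls2[of w z] z wS by metis
    have nEwz: "\<not> E w z" "\<not> E z w" using fp[OF wS z(1)] fp[OF z(1) wS] z(3) by auto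
    have nEwu: "\<not> E w u" using nEuw sym uS wS by blast
    have zadj: "E z a" if a: "a \<in> U \<union> Z0" "a \<noteq> z" for a
    proof (rule ccontr)
      assume nE: "\<not> E z a"
      have aS: "a \<in> S" using a US Z0(1) by blast
      have nE2: "\<not> E a z" using nE sym aS z(1) by blast
      show False
      proof (cases "a \<in> U")
        case aU: True
        show False
        proof (cases "a = u")
          case True
          have "E u w \<or> E w z \<or> E u z" using tri[OF uS wS z(1) wu[symmetric] z(2)[symmetric]] znU uU by blast
          thus False using nEuw nEwz nE2 True by blast
        next
          case au: False
          define g where "g = f(w := f u, z := f a)"
          show False
          proof (rule free[of g "f w"])
            show "\<forall>x\<in>S. g x < k" using lt uS aS unfolding g_def by auto
            show "f w < k" using lt wS by blast
            show "\<forall>x\<in>S. g x \<noteq> f w"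
            proof
              fix x assume xS: "x \<in> S"
              have "f u \<noteq> f w" using Uuniq[OF uU wS] wu by auto
              moreover have "f a \<noteq> f w" using Uuniq[OF aU wS] wnU aU by auto
              moreover have "x \<noteq> w \<Longrightarrow> x \<noteq> z \<Longrightarrow> f x \<noteq> f w" using clsw[OF xS] by blast
              ultimately show "g x \<noteq> f w" unfolding g_def by auto
            qed
            show "\<forall>x\<in>S. \<forall>y\<in>S. E x y \<longrightarrow> g x \<noteq> g y"
            proof (intro ballI impI)
              fix x y assume xy: "x \<in> S" "y \<in> S" "E x y"
              have fua: "f u \<noteq> f a" using Uuniq[OF uU aS] au by auto
              have ux: "x \<noteq> w \<Longrightarrow> x \<noteq> z \<Longrightarrow> g x = f x" unfolding g_def by simp
              have uy: "y \<noteq> w \<Longrightarrow> y \<noteq> z \<Longrightarrow> g y = f y" unfolding g_def by simp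
              have gw: "g w = f u" using z(2) unfolding g_def by simp
              have gz: "g z = f a" unfolding g_def by simp
              show "g x \<noteq> g y"
              proof (cases "x = w")
                case True
                thus ?thesis using xy gw gz fua ux uy Uuniq[OF uU xy(2)] nEwu irr wS
                  by (cases "y = z"; cases "y = w") auto
              next
                case xw: False
                show ?thesis
                proof (cases "x = z")
                  case True
                  thus ?thesis using xy gw gz fua uy Uuniq[OF aU xy(2)] nE irr z(1) xw
                    by (cases "y = z"; cases "y = w") (auto simp: eq_commute)
                next
                  case xz: False
                  show ?thesis
                  proof (cases "y = w")
                    case True
                    thus ?thesis using xy gw ux xw xz Uuniq[OF uU xy(1)] nEuw by fastforce
                  next
                    case yw: False
                    show ?thesis
                    proof (cases "y = z")
                      case True
                      thus ?thesis using xy gz ux xw xz Uuniq[OF aU xy(1)] nE2 by fastforce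
                    next
                      case False
                      thus ?thesis using ux uy xw xz yw fp[OF xy] by simp
                    qed
                  qed
                qed
              qed
            qed
          qed
        qed
      next
        case aZ: False
        hence aZ0: "a \<in> Z0" using a by blast
        obtain u0 w0 where u0: "u0 \<in> W0" "w0 \<in> S" "w0 \<noteq> a" "f w0 = f a" "\<not> E u0 w0"
          using Z0(4) aZ0 by blast
        have u0U: "u0 \<in> U" using u0(1) W0U by blast
        have u0S: "u0 \<in> S" using u0U US by blast
        have uu0: "u \<noteq> u0" using u0(1) insert.hyps(2) by blast
        have anU: "a \<notin> U" using aZ0 Z0(1) by blast
        have w0nU: "w0 \<notin> U" using Uuniq[of w0 a] aS u0 anU by metis
        have faw: "f a \<noteq> f w" using w(2) aZ0 by (metis image_eqI)
        have w0w: "w0 \<noteq> w" "w0 \<noteq> z" "a \<noteq> w" using faw u0(4) z(3) by auto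
        have fuu0: "f u \<noteq> f u0" using Uuniq[OF uU u0S] uu0 by auto
        have fua: "f u \<noteq> f a" using Uuniq[OF uU aS] anU uU by auto
        have fu0a: "f u0 \<noteq> f a" using Uuniq[OF u0U aS] anU u0U by auto
        have fzu: "f z \<noteq> f u" using Uuniq[OF uU z(1)] znU uU by auto
        have fzu0: "f z \<noteq> f u0" using Uuniq[OF u0U z(1)] znU u0U by auto
        have clsa: "\<And>y. y \<in> S \<Longrightarrow> f y = f a \<Longrightarrow> y = a \<or> y = w0" using cls2[of a w0] u0 aS by metis
        have nEw0u0: "\<not> E w0 u0" using u0(5) sym u0S u0(2) by blast
        define g where "g = f(w := f u, w0 := f u0, a := f z)"
        have gw: "g w = f u" using w0w unfolding g_def by simp
        have gw0: "g w0 = f u0" using u0(3) unfolding g_def by simp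
        have ga: "g a = f z" unfolding g_def by simp
        have gz: "g z = f z" using w0w z(2) a(2) unfolding g_def by simp
        have go: "\<And>x. x \<noteq> w \<Longrightarrow> x \<noteq> w0 \<Longrightarrow> x \<noteq> a \<Longrightarrow> g x = f x" unfolding g_def by simp
        show False
        proof (rule free[of g "f a"])
          show "\<forall>x\<in>S. g x < k" using lt uS u0S z(1) unfolding g_def by auto
          show "f a < k" using lt aS by blast
          show "\<forall>x\<in>S. g x \<noteq> f a"
          proof
            fix x assume xS: "x \<in> S"
            show "g x \<noteq> f a"
              using gw gw0 ga go[of x] clsa[OF xS] fua fu0a faw z(3) u0(3) w0w
              by (cases "x = w"; cases "x = w0"; cases "x = a") auto
          qed
          show "\<forall>x\<in>S. \<forall>y\<in>S. E x y \<longrightarrow> g x \<noteq> g y"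
          proof (intro ballI impI)
            fix x y assume xy: "x \<in> S" "y \<in> S" "E x y"
            have yx: "E y x" using sym xy by blast
            have cls_x: "x = w \<or> x = w0 \<or> x = a \<or> g x = f x" using go by blast
            have cls_y: "y = w \<or> y = w0 \<or> y = a \<or> g y = f y" using go by blast
            show "g x \<noteq> g y"
            proof
              assume eq: "g x = g y"
              have C1: False if "x = w" "y = w" using that xy irr by blast
              have C2: False if "x = w0" "y = w0" using that xy irr by blast
              have C3: False if "x = a" "y = a" using that xy irr by blast
              have D1: False if "x = w" "y = w0" using that eq gw gw0 fuu0 by simp
              have D2: False if "x = w" "y = a" using that eq gw ga fzu by simp
              have D3: False if "x = w0" "y = a" using that eq gw0 ga fzu0 by simp
              have D1': False if "y = w" "x = w0" using that eq gw gw0 fuu0 by simp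
              have D2': False if "y = w" "x = a" using that eq gw ga fzu by simp
              have D3': False if "y = w0" "x = a" using that eq gw0 ga fzu0 by simp
              have E1: False if "x = w" "y \<noteq> w" "y \<noteq> w0" "y \<noteq> a"
                using that eq gw go[of y] Uuniq[OF uU xy(2)] xy nEwu by auto
              have E2: False if "x = w0" "y \<noteq> w" "y \<noteq> w0" "y \<noteq> a"
                using that eq gw0 go[of y] Uuniq[OF u0U xy(2)] xy nEw0u0 by auto
              have E3: False if "x = a" "y \<noteq> w" "y \<noteq> w0" "y \<noteq> a"
                using that eq ga go[of y] clsw[OF xy(2)] z(3) xy nE2 by auto
              have E1': False if "y = w" "x \<noteq> w" "x \<noteq> w0" "x \<noteq> a"
                using that eq gw go[of x] Uuniq[OF uU xy(1)] xy nEuw by auto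
              have E2': False if "y = w0" "x \<noteq> w" "x \<noteq> w0" "x \<noteq> a"
                using that eq gw0 go[of x] Uuniq[OF u0U xy(1)] xy u0(5) by auto
              have E3': False if "y = a" "x \<noteq> w" "x \<noteq> w0" "x \<noteq> a"
                using that eq ga go[of x] clsw[OF xy(1)] z(3) xy nE by auto
              have F: False if "x \<noteq> w" "x \<noteq> w0" "x \<noteq> a" "y \<noteq> w" "y \<noteq> w0" "y \<noteq> a"
                using that eq go[of x] go[of y] fp[OF xy] by simp
              show False using C1 C2 C3 D1 D2 D3 D1' D2' D3' E1 E2 E3 E1' E2' E3' F by blast
            qed
          qed
        qed
      qed
    qed
    have finZ0: "finite Z0" using Z0(1) fin finite_subset by (metis Diff_subset)
    show ?case
    proof (rule exI[of _ "insert z Z0"], intro conjI)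
      show "insert z Z0 \<subseteq> S - U" using z(1) znU Z0(1) by blast
      show "card (insert z Z0) = card (insert u W0)"
        using finZ0 zZ0 Z0(2) insert.hyps(1,2) by simp
      show "\<forall>z'\<in>insert z Z0. \<forall>a\<in>U \<union> insert z Z0. a \<noteq> z' \<longrightarrow> E z' a"
      proof (intro ballI impI)
        fix z' a assume za: "z' \<in> insert z Z0" "a \<in> U \<union> insert z Z0" "a \<noteq> z'"
        show "E z' a"
        proof (cases "z' = z")
          case True
          thus ?thesis using zadj[of a] za by blast
        next
          case False
          hence z'Z0: "z' \<in> Z0" using za by blast
          have z'S: "z' \<in> S" using z'Z0 Z0(1) by blast
          show ?thesis
          proof (cases "a = z")
            case True
            have "E z z'" using zadj[of z'] z'Z0 False by blast
            thus ?thesis using True sym z(1) z'S by blast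
          next
            case False
            thus ?thesis using Z0(3) z'Z0 za by blast
          qed
        qed
      qed
      show "\<forall>z'\<in>insert z Z0. \<exists>u'\<in>insert u W0. \<exists>w'\<in>S. w' \<noteq> z' \<and> f w' = f z' \<and> \<not> E u' w'"
      proof
        fix z' assume "z' \<in> insert z Z0"
        thus "\<exists>u'\<in>insert u W0. \<exists>w'\<in>S. w' \<noteq> z' \<and> f w' = f z' \<and> \<not> E u' w'"
        proof
          assume "z' = z"
          thus ?thesis using wS z nEuw by auto
        next
          assume "z' \<in> Z0"
          thus ?thesis using Z0(4) by blast
        qed
      qed
    qed
  qed
  obtain W where W: "W \<subseteq> U" "card W = min (card U) dbar"
    using obtain_subset_with_card_n[of "min (card U) dbar" U] by (metis min.cobounded1)
  have finW: "finite W" using W(1) Uf finite_subset by blast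
  obtain Z where Z: "Z \<subseteq> S - U" "card Z = card W" "\<forall>z\<in>Z. \<forall>a\<in>U \<union> Z. a \<noteq> z \<longrightarrow> E z a"
    using B6[OF finW W(1)] W(2) by auto
  have finZ: "finite Z" using Z(1) fin finite_subset by (metis Diff_subset)
  have "is_clique S E (U \<union> Z)"
    unfolding is_clique_def
  proof (intro conjI ballI impI)
    show "U \<union> Z \<subseteq> S" using US Z(1) by blast
    fix p q assume pq: "p \<in> U \<union> Z" "q \<in> U \<union> Z" "p \<noteq> q"
    show "E p q"
    proof (cases "p \<in> Z")
      case True
      have "q \<noteq> p" using pq by simp
      thus ?thesis using Z(3) True pq(2) by blast
    next
      case pU: False
      show ?thesis
      proof (cases "q \<in> Z")
        case True
        hence "E q p" using Z(3) pq(1,3) by blast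
        thus ?thesis using sym pq US Z(1) by blast
      next
        case False
        thus ?thesis using B4 pq pU by blast
      qed
    qed
  qed
  hence "card (U \<union> Z) \<le> clique_number S E" using omega_ge[OF fin] by blast
  moreover have "card (U \<union> Z) = card U + card Z" using Uf finZ Z(1) by (subst card_Un_disjoint) auto
  ultimately have om: "card U + min (card U) dbar \<le> clique_number S E" using Z(2) W(2) by simp
  show ?thesis
    using om B5 B3 Dle unfolding k_def[symmetric] dbar_def by (simp add: min_def split: if_splits)
qed



lemma mainL:
  "simple_graph S E \<Longrightarrow> 4 * int (chromatic_number S E) + max 0 (chromatic_excess S E)
     \<le> int (card S) + 2 * int (clique_number S E) + int (max_degree S E) + 1"
proof (induction "card S" arbitrary: S rule: less_induct)
  case less
  have sg: "simple_graph S E" by fact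
  have fin: "finite S" using sg_fin[OF sg] .
  have ne: "S \<noteq> {}" using sg_ne[OF sg] .
  have sym: "\<And>a b. a \<in> S \<Longrightarrow> b \<in> S \<Longrightarrow> E a b \<Longrightarrow> E b a" using sg_sym[OF sg] by blast
  have irr: "\<And>a. a \<in> S \<Longrightarrow> \<not> E a a" using sg_irr[OF sg] by blast
  show ?case
  proof (cases "chromatic_excess S E \<ge> 0")
    case False
    have tri: "E x y \<or> E y z \<or> E x z" if xyz: "x\<in>S" "y\<in>S" "z\<in>S" "x\<noteq>y" "y\<noteq>z" "x\<noteq>z" for x y z
    proof (rule ccontr)
      assume nE: "\<not> (E x y \<or> E y z \<or> E x z)"
      have nE2: "\<not> E y x" "\<not> E z y" "\<not> E z x" using nE sym xyz by blast+
      have "proper_colouring {x,y,z} E 1 (\<lambda>_. 0)"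
        unfolding proper_colouring_def using nE nE2 irr xyz by auto
      hence "chromatic_number {x,y,z} E \<le> 1" by (rule chi_le)
      moreover have "card {x,y,z} = 3" using xyz by simp
      moreover have "int (card {x,y,z}) - 3 * int (chromatic_number {x,y,z} E) \<le> chromatic_excess S E"
        using eta_ge[OF fin, of "{x,y,z}" E] xyz by blast
      ultimately show False using False by linarith
    qed
    have "4 * chromatic_number S E \<le> card S + 2 * clique_number S E + max_degree S E + 1"
      using caseB[OF sg tri] by blast
    thus ?thesis using False by linarith
  next
    case etaPos: True
    have mx: "max 0 (chromatic_excess S E) = chromatic_excess S E" using etaPos by simp
    obtain H where H: "H \<subseteq> S" "H \<noteq> {}" "chromatic_excess S E = int (card H) - 3 * int (chromatic_number H E)"
      using eta_ex[OF fin ne] by blast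
    have sgH: "simple_graph H E" using sg_sub[OF sg H(1,2)] .
    have finH: "finite H" using sg_fin[OF sgH] .
    define k where "k = chromatic_number H E"
    obtain f where f: "proper_colouring H E k f" using sg_chi_ex[OF sgH] k_def by blast
    define R where "R = S - H"
    show ?thesis
    proof (cases "R = {}")
      case True
      hence HS: "H = S" using H(1) R_def by blast
      have "chromatic_number S E \<le> Suc (max_degree S E)" using chi_le_Delta[OF sg] .
      moreover have "chromatic_excess S E = int (card S) - 3 * int (chromatic_number S E)" using H(3) HS by simp
      ultimately show ?thesis using mx by linarith
    next
      case False
      have sgR: "simple_graph R E" using sg_sub[OF sg _ False] R_def by blast
      have "R \<subset> S" using H(1,2) R_def by blast
      hence lessR: "card R < card S" using psubset_card_mono[OF fin] by blast
      have IH: "4 * int (chromatic_number R E) + max 0 (chromatic_excess R E)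
          \<le> int (card R) + 2 * int (clique_number R E) + int (max_degree R E) + 1"
        using less.hyps[OF lessR sgR] .
      have finR: "finite R" using sg_fin[OF sgR] .
      obtain g where g: "proper_colouring R E (chromatic_number R E) g" using sg_chi_ex[OF sgR] by blast
      define h where "h x = (if x \<in> H then f x else k + g x)" for x
      have "proper_colouring S E (k + chromatic_number R E) h"
        unfolding proper_colouring_def
      proof (intro conjI ballI impI)
        fix x assume "x \<in> S"
        thus "h x < k + chromatic_number R E" using f g unfolding h_def proper_colouring_def R_def
          by (cases "x \<in> H") auto
      next
        fix x y assume xy: "x \<in> S" "y \<in> S" "E x y"
        show "h x \<noteq> h y"
          using f g xy unfolding h_def proper_colouring_def R_def
          by (cases "x \<in> H"; cases "y \<in> H") force+
      qed
      hence chiS: "chromatic_number S E \<le> k + chromatic_number R E" by (rule chi_le)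
      obtain r where r: "r \<in> R" "degree R E r = max_degree R E" using Delta_ex[OF finR False] by blast
      have rS: "r \<in> S" and rH: "r \<notin> H" using r(1) R_def by auto
      have adj: "\<exists>x\<in>H. f x = j \<and> E r x" if j: "j < k" for j
      proof (rule ccontr)
        assume "\<not> (\<exists>x\<in>H. f x = j \<and> E r x)"
        hence nadj: "\<And>x. x \<in> H \<Longrightarrow> f x = j \<Longrightarrow> \<not> E r x" by blast
        define f' where "f' = f(r := j)"
        have "proper_colouring (insert r H) E k f'"
          unfolding proper_colouring_def
        proof (intro conjI ballI impI)
          fix x assume "x \<in> insert r H"
          thus "f' x < k" using f j unfolding f'_def proper_colouring_def by auto
        next
          fix x y assume xy: "x \<in> insert r H" "y \<in> insert r H" "E x y"
          have xS: "x \<in> S" and yS: "y \<in> S" using xy H(1) rS by auto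
          show "f' x \<noteq> f' y"
          proof (cases "x = r")
            case True
            show ?thesis
            proof (cases "y = r")
              case True thus ?thesis using \<open>x = r\<close> xy irr rS by blast
            next
              case False
              hence "y \<in> H" using xy by blast
              thus ?thesis using nadj[of y] xy \<open>x = r\<close> False unfolding f'_def by auto
            qed
          next
            case xr: False
            hence xH: "x \<in> H" using xy by blast
            show ?thesis
            proof (cases "y = r")
              case True
              have "E r x" using sym[OF xS yS xy(3)] True by simp
              thus ?thesis using nadj[OF xH] True xr unfolding f'_def by auto
            next
              case False
              hence "y \<in> H" using xy by blast
              thus ?thesis using f xH xy xr False unfolding f'_def proper_colouring_def by auto
            qed
          qed
        qed
        hence c1: "chromatic_number (insert r H) E \<le> k" by (rule chi_le)
        have "int (card (insert r H)) - 3 * int (chromatic_number (insert r H) E) \<le> chromatic_excess S E"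
          using eta_ge[OF fin, of "insert r H" E] rS H(1) by blast
        moreover have "card (insert r H) = card H + 1" using finH rH by simp
        ultimately show False using c1 H(3) k_def by linarith
      qed
      have "{..<k} \<subseteq> f ` {x\<in>H. E r x}" using adj by force
      hence kle: "k \<le> card {x\<in>H. E r x}" using surj_card_le[of "{x\<in>H. E r x}" "{..<k}" f] finH by simp
      have "{u\<in>S. E r u} = {u\<in>R. E r u} \<union> {x\<in>H. E r x}" using H(1) R_def by blast
      hence "degree S E r = degree R E r + card {x\<in>H. E r x}"
        unfolding degree_def using finR finH R_def by (subst card_Un_disjoint[symmetric]) auto
      moreover have "degree S E r \<le> max_degree S E" using Delta_ge[OF fin rS] .
      ultimately have degle: "max_degree R E + k \<le> max_degree S E" using r(2) kle by linarith
      have omle: "clique_number R E \<le> clique_number S E" using omega_mono[OF fin] R_def by blast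
      have "card S = card R + card H" using fin H(1) R_def
        by (metis card_Diff_subset add.commute finH card_mono le_add_diff_inverse)
      thus ?thesis using IH chiS degle omle H(3) k_def mx by linarith
    qed
  qed
qed



lemma chi_image:
  assumes f: "proper_colouring T E k f" and fin: "finite T"
  shows "chromatic_number T E \<le> card (f ` T)"
proof -
  define C where "C = f ` T"
  have finC: "finite C" using fin C_def by simp
  define rk where "rk c = card {c'\<in>C. c' < c}" for c
  have rk_lt: "rk c < card C" if "c \<in> C" for c
    unfolding rk_def using that finC by (intro psubset_card_mono) auto
  have rk_mono: "rk c < rk d" if "c \<in> C" "d \<in> C" "c < d" for c d
    unfolding rk_def using that finC by (intro psubset_card_mono) auto
  have "proper_colouring T E (card C) (rk \<circ> f)"
    unfolding proper_colouring_def
  proof (intro conjI ballI impI)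
    fix x assume "x \<in> T" thus "(rk \<circ> f) x < card C" using rk_lt C_def by simp
  next
    fix x y assume xy: "x \<in> T" "y \<in> T" "E x y"
    hence ne: "f x \<noteq> f y" using f unfolding proper_colouring_def by blast
    have "f x \<in> C" "f y \<in> C" using xy C_def by auto
    thus "(rk \<circ> f) x \<noteq> (rk \<circ> f) y" using ne rk_mono
      by (metis comp_apply less_irrefl linorder_neqE_nat)
  qed
  thus ?thesis using chi_le C_def by metis
qed

lemma chi_join_lower:
  assumes sg: "simple_graph H E" and HAB: "H = HA \<union> HB" "HA \<inter> HB = {}"
    and adj: "\<forall>a\<in>HA. \<forall>b\<in>HB. E a b"
  shows "chromatic_number HA E + chromatic_number HB E \<le> chromatic_number H E"
proof -
  have fin: "finite H" using sg_fin[OF sg] .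
  obtain f where f: "proper_colouring H E (chromatic_number H E) f" using sg_chi_ex[OF sg] by blast
  have finA: "finite HA" and finB: "finite HB" using fin HAB by auto
  have "chromatic_number HA E \<le> card (f ` HA)"
    using chi_image[OF proper_sub[OF f] finA] HAB by blast
  moreover have "chromatic_number HB E \<le> card (f ` HB)"
    using chi_image[OF proper_sub[OF f] finB] HAB by blast
  moreover have "f ` HA \<inter> f ` HB = {}"
  proof (rule ccontr)
    assume "f ` HA \<inter> f ` HB \<noteq> {}"
    then obtain a b where ab: "a \<in> HA" "b \<in> HB" "f a = f b" by blast
    hence "E a b" using adj by blast
    thus False using f ab HAB unfolding proper_colouring_def by blast
  qed
  hence "card (f ` HA) + card (f ` HB) = card (f ` H)"
    using HAB finA finB by (simp add: card_Un_disjoint image_Un)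
  moreover have "card (f ` H) \<le> chromatic_number H E"
  proof -
    have "f ` H \<subseteq> {..<chromatic_number H E}" using f unfolding proper_colouring_def by auto
    thus ?thesis using card_mono[of "{..<chromatic_number H E}" "f ` H"] by simp
  qed
  ultimately show ?thesis by linarith
qed

lemma join_bound:
  assumes sg: "simple_graph S E" and AB: "S = A \<union> B" "A \<inter> B = {}" "A \<noteq> {}" "B \<noteq> {}"
    and adj: "\<forall>p\<in>A. \<forall>q\<in>B. E p q"
  shows "4 * int (chromatic_number S E) + chromatic_excess S E
     \<le> 2 * int (clique_number S E) + 2 * int (max_degree S E) + 2"
proof -
  have fin: "finite S" using sg_fin[OF sg] .
  have sym: "\<And>a b. a \<in> S \<Longrightarrow> b \<in> S \<Longrightarrow> E a b \<Longrightarrow> E b a" using sg_sym[OF sg] by blast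
  have sgA: "simple_graph A E" using sg_sub[OF sg _ AB(3)] AB(1) by blast
  have sgB: "simple_graph B E" using sg_sub[OF sg _ AB(4)] AB(1) by blast
  have finA: "finite A" and finB: "finite B" using fin AB(1) by auto
  obtain fA where fA: "proper_colouring A E (chromatic_number A E) fA" using sg_chi_ex[OF sgA] by blast
  obtain fB where fB: "proper_colouring B E (chromatic_number B E) fB" using sg_chi_ex[OF sgB] by blast
  define h where "h x = (if x \<in> A then fA x else chromatic_number A E + fB x)" for x
  have "proper_colouring S E (chromatic_number A E + chromatic_number B E) h"
    unfolding proper_colouring_def
  proof (intro conjI ballI impI)
    fix x assume "x \<in> S"
    thus "h x < chromatic_number A E + chromatic_number B E" using fA fB AB unfolding h_def proper_colouring_def
      by (cases "x \<in> A") auto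
  next
    fix x y assume xy: "x \<in> S" "y \<in> S" "E x y"
    show "h x \<noteq> h y"
      using fA fB xy AB unfolding h_def proper_colouring_def
      by (cases "x \<in> A"; cases "y \<in> A") force+
  qed
  hence chiS: "chromatic_number S E \<le> chromatic_number A E + chromatic_number B E" by (rule chi_le)
  obtain CA where CA: "is_clique A E CA" "card CA = clique_number A E" using omega_ex[OF finA] by blast
  obtain CB where CB: "is_clique B E CB" "card CB = clique_number B E" using omega_ex[OF finB] by blast
  have "is_clique S E (CA \<union> CB)"
    unfolding is_clique_def
  proof (intro conjI ballI impI)
    show "CA \<union> CB \<subseteq> S" using CA CB AB unfolding is_clique_def by blast
    fix p q assume pq: "p \<in> CA \<union> CB" "q \<in> CA \<union> CB" "p \<noteq> q"
    have sub: "CA \<subseteq> A" "CB \<subseteq> B" using CA CB unfolding is_clique_def by auto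
    show "E p q"
    proof (cases "p \<in> CA")
      case True
      show ?thesis
      proof (cases "q \<in> CA")
        case True thus ?thesis using \<open>p \<in> CA\<close> pq CA unfolding is_clique_def by blast
      next
        case False thus ?thesis using True pq adj sub by blast
      qed
    next
      case False
      hence pB: "p \<in> CB" using pq by blast
      show ?thesis
      proof (cases "q \<in> CA")
        case True
        hence "E q p" using pB adj sub by blast
        thus ?thesis using sym pB True sub AB(1) by blast
      next
        case False thus ?thesis using pB pq CB unfolding is_clique_def by blast
      qed
    qed
  qed
  hence "card (CA \<union> CB) \<le> clique_number S E" using omega_ge[OF fin] by blast
  moreover have "card (CA \<union> CB) = card CA + card CB"
    using CA CB AB finA finB unfolding is_clique_def
    by (intro card_Un_disjoint) (auto intro: finite_subset)
  ultimately have omS: "clique_number A E + clique_number B E \<le> clique_number S E" using CA CB by simp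
  have DeltaA: "card B + max_degree A E \<le> max_degree S E"
  proof -
    obtain v where v: "v \<in> A" "degree A E v = max_degree A E" using Delta_ex[OF finA AB(3)] by blast
    have "{u\<in>S. E v u} = {u\<in>A. E v u} \<union> B"
      using adj sym v(1) AB(1,2) by blast
    hence "degree S E v = degree A E v + card B"
      unfolding degree_def using finA finB AB(2) by (subst card_Un_disjoint[symmetric]) auto
    moreover have "degree S E v \<le> max_degree S E" using Delta_ge[OF fin] v(1) AB(1) by blast
    ultimately show ?thesis using v(2) by linarith
  qed
  have DeltaB: "card A + max_degree B E \<le> max_degree S E"
  proof -
    obtain v where v: "v \<in> B" "degree B E v = max_degree B E" using Delta_ex[OF finB AB(4)] by blast
    have "{u\<in>S. E v u} = {u\<in>B. E v u} \<union> A"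
      using adj sym v(1) AB(1,2) by blast
    hence "degree S E v = degree B E v + card A"
      unfolding degree_def using finA finB AB(2) by (subst card_Un_disjoint[symmetric]) auto
    moreover have "degree S E v \<le> max_degree S E" using Delta_ge[OF fin] v(1) AB(1) by blast
    ultimately show ?thesis using v(2) by linarith
  qed
  have partA: "int (card HA) - 3 * int (chromatic_number HA E) \<le> max 0 (chromatic_excess A E)" if "HA \<subseteq> A" for HA
  proof (cases "HA = {}")
    case True thus ?thesis by (simp add: chi_empty)
  next
    case False thus ?thesis using eta_ge[OF finA that False, of E] by linarith
  qed
  have partB: "int (card HB) - 3 * int (chromatic_number HB E) \<le> max 0 (chromatic_excess B E)" if "HB \<subseteq> B" for HB
  proof (cases "HB = {}")
    case True thus ?thesis by (simp add: chi_empty)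
  next
    case False thus ?thesis using eta_ge[OF finB that False, of E] by linarith
  qed
  have etaS: "chromatic_excess S E \<le> max 0 (chromatic_excess A E) + max 0 (chromatic_excess B E)"
  proof -
    obtain H where H: "H \<subseteq> S" "H \<noteq> {}" "chromatic_excess S E = int (card H) - 3 * int (chromatic_number H E)"
      using eta_ex[OF fin sg_ne[OF sg]] by blast
    have sgH: "simple_graph H E" using sg_sub[OF sg H(1,2)] .
    have HAB: "H = (H \<inter> A) \<union> (H \<inter> B)" "(H \<inter> A) \<inter> (H \<inter> B) = {}" using H(1) AB(1,2) by auto
    have "chromatic_number (H \<inter> A) E + chromatic_number (H \<inter> B) E \<le> chromatic_number H E"
      using chi_join_lower[OF sgH HAB] adj by blast
    moreover have "card H = card (H \<inter> A) + card (H \<inter> B)"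
      using HAB finA finB by (metis card_Un_disjoint finite_Int)
    moreover note partA[of "H \<inter> A"] partB[of "H \<inter> B"]
    ultimately show ?thesis using H(3) by force
  qed
  have LA: "4 * int (chromatic_number A E) + max 0 (chromatic_excess A E)
     \<le> int (card A) + 2 * int (clique_number A E) + int (max_degree A E) + 1" using mainL[OF sgA] .
  have LB: "4 * int (chromatic_number B E) + max 0 (chromatic_excess B E)
     \<le> int (card B) + 2 * int (clique_number B E) + int (max_degree B E) + 1" using mainL[OF sgB] .
  show ?thesis using LA LB etaS chiS omS DeltaA DeltaB by linarith
qed



lemma chi_single: "simple_graph S E \<Longrightarrow> a \<in> S \<Longrightarrow> chromatic_number {a} E \<le> 1"
  by (rule chi_le[of _ _ _ "\<lambda>_. 0"]) (auto simp: proper_colouring_def dest: sg_irr)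

theorem corollary13:
  fixes V :: "'a set" and E :: "'a \<Rightarrow> 'a \<Rightarrow> bool"
  assumes "simple_graph V E"
  shows "real (chromatic_number V E) \<le>
           (real (clique_number V E) + real (max_degree V E) + 1) / 2
           + (5 * real (vertex_connectivity V (compl_adj E)) - real_of_int (chromatic_excess V E)) / 4"
proof -
  have sg: "simple_graph V E" by fact
  have fin: "finite V" using sg_fin[OF sg] .
  have ne: "V \<noteq> {}" using sg_ne[OF sg] .
  obtain a0 where a0: "a0 \<in> V" using ne by blast
  have om1: "clique_number V E \<ge> 1" using omega_pos[OF fin a0] .
  show ?thesis
  proof (cases "is_complete V (compl_adj E)")
    case True
    have noE: "\<not> E x y" if "x \<in> V" "y \<in> V" for x y
      using True that sg_irr[OF sg] unfolding is_complete_def compl_adj_def by metis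
    have kap: "vertex_connectivity V (compl_adj E) = card V - 1"
      using True unfolding vertex_connectivity_def by simp
    have c1: "card V \<ge> 1" using fin ne by (simp add: Suc_leI card_gt_0_iff)
    have chi1: "chromatic_number V E \<le> 1"
      by (rule chi_le[of _ _ _ "\<lambda>_. 0"]) (auto simp: proper_colouring_def noE)
    obtain H where H: "H \<subseteq> V" "H \<noteq> {}" "chromatic_excess V E = int (card H) - 3 * int (chromatic_number H E)"
      using eta_ex[OF fin ne] by blast
    have "chromatic_number H E \<ge> 1" using chi_pos sg_sub[OF sg H(1,2)] by blast
    moreover have "card H \<le> card V" using card_mono[OF fin H(1)] .
    ultimately have eta: "chromatic_excess V E \<le> int (card V) - 3" using H(3) by linarith
    have "real (vertex_connectivity V (compl_adj E)) = real (card V) - 1" using kap c1 by simp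
    moreover have "real_of_int (chromatic_excess V E) \<le> real (card V) - 3"
      using eta by (metis of_int_le_iff of_int_diff of_int_of_nat_eq of_int_numeral)
    moreover have "real (chromatic_number V E) \<le> 1" using chi1 by simp
    moreover have "real (clique_number V E) \<ge> 1" using om1 by simp
    moreover have "real (card V) \<ge> 1" using c1 by simp
    moreover have "real (max_degree V E) \<ge> 0" by simp
    ultimately show ?thesis by (simp add: field_simps)
  next
    case False
    then obtain x y where xy: "x \<in> V" "y \<in> V" "x \<noteq> y" "E x y"
      unfolding is_complete_def compl_adj_def by blast
    define KS where "KS = {card K | K. K \<subseteq> V \<and> \<not> connected_in (V - K) (compl_adj E)}"
    have kap: "vertex_connectivity V (compl_adj E) = Min KS"
      using False unfolding vertex_connectivity_def KS_def by simp
    have "\<not> connected_in (V - (V - {x, y})) (compl_adj E)"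
    proof
      assume "connected_in (V - (V - {x, y})) (compl_adj E)"
      moreover have "V - (V - {x, y}) = {x, y}" using xy by auto
      ultimately have r: "(\<lambda>u v. u \<in> {x,y} \<and> v \<in> {x,y} \<and> compl_adj E u v)\<^sup>*\<^sup>* x y"
        unfolding connected_in_def by simp
      have "(\<lambda>u v. u \<in> {x,y} \<and> v \<in> {x,y} \<and> compl_adj E u v)\<^sup>*\<^sup>* x v \<Longrightarrow> v = x" for v
      proof (induction rule: rtranclp_induct)
        case base thus ?case by simp
        next
        case (step v w)
        thus ?case using xy unfolding compl_adj_def by auto
      qed
      thus False using r xy(3) by blast
    qed
    hence KSne: "KS \<noteq> {}" unfolding KS_def by blast
    have KSfin: "finite KS"
    proof -
      have "KS \<subseteq> card ` Pow V" unfolding KS_def by auto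
      thus ?thesis using fin finite_subset by blast
    qed
    have "Min KS \<in> KS" using Min_in[OF KSfin KSne] .
    then obtain K where K: "K \<subseteq> V" "\<not> connected_in (V - K) (compl_adj E)"
      "vertex_connectivity V (compl_adj E) = card K" using kap unfolding KS_def by auto
    define S where "S = V - K"
    define Rs where "Rs = (\<lambda>u v. u \<in> S \<and> v \<in> S \<and> compl_adj E u v)"
    obtain a b where ab: "a \<in> S" "b \<in> S" "\<not> Rs\<^sup>*\<^sup>* a b"
      using K(2) unfolding connected_in_def S_def Rs_def by blast
    define A where "A = {v\<in>S. Rs\<^sup>*\<^sup>* a v}"
    define B where "B = S - A"
    have AB: "S = A \<union> B" "A \<inter> B = {}" "A \<noteq> {}" "B \<noteq> {}"
      using ab unfolding A_def B_def by auto
    have adj: "\<forall>p\<in>A. \<forall>q\<in>B. E p q"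
    proof (intro ballI, rule ccontr)
      fix p q assume pq: "p \<in> A" "q \<in> B" "\<not> E p q"
      have "p \<noteq> q" using pq AB by blast
      hence "Rs p q" using pq unfolding Rs_def compl_adj_def A_def B_def by auto
      moreover have "Rs\<^sup>*\<^sup>* a p" using pq(1) unfolding A_def by simp
      ultimately have "Rs\<^sup>*\<^sup>* a q" by (simp add: rtranclp.rtrancl_into_rtrancl)
      thus False using pq(2) unfolding A_def B_def Rs_def by auto
    qed
    have Sne: "S \<noteq> {}" using ab by blast
    have sgS: "simple_graph S E" using sg_sub[OF sg _ Sne] S_def by blast
    have J: "4 * int (chromatic_number S E) + chromatic_excess S E
     \<le> 2 * int (clique_number S E) + 2 * int (max_degree S E) + 2"
      using join_bound[OF sgS AB adj] .
    have SK: "S \<union> K = V" using K(1) S_def by blast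
    have chiV: "chromatic_number V E \<le> chromatic_number S E + card K"
      using chi_union_le[of S K E] SK sg Sne by simp
    have omV: "clique_number S E \<le> clique_number V E" using omega_mono[OF fin] S_def by blast
    have DV: "max_degree S E \<le> max_degree V E" using Delta_mono[OF fin _ Sne] S_def by blast
    have etaS2: "chromatic_excess S E \<ge> -2"
    proof -
      have "chromatic_number {a} E \<le> 1" using chi_single[OF sgS ab(1)] .
      moreover have "int (card {a}) - 3 * int (chromatic_number {a} E) \<le> chromatic_excess S E"
        using eta_ge[OF sg_fin[OF sgS], of "{a}" E] ab(1) by blast
      ultimately show ?thesis by simp
    qed
    have etaV: "chromatic_excess V E \<le> chromatic_excess S E + int (card K)"
    proof -
      obtain H where H: "H \<subseteq> V" "H \<noteq> {}" "chromatic_excess V E = int (card H) - 3 * int (chromatic_number H E)"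
        using eta_ex[OF fin ne] by blast
      have sgH: "simple_graph H E" using sg_sub[OF sg H(1,2)] .
      have finK: "finite K" using K(1) fin finite_subset by blast
      show ?thesis
      proof (cases "H \<inter> S = {}")
        case True
        hence "H \<subseteq> K" using H(1) S_def by blast
        hence "card H \<le> card K" using card_mono[OF finK] by blast
        moreover have "chromatic_number H E \<ge> 1" using chi_pos[OF sgH] .
        ultimately show ?thesis using H(3) etaS2 by linarith
      next
        case False
        have "H \<subseteq> (H \<inter> S) \<union> K" using H(1) S_def by blast
        hence "card H \<le> card (H \<inter> S) + card K"
          by (meson card_Un_le card_mono finK fin finite_Int finite_UnI le_trans sg_fin sgS)
        moreover have "chromatic_number (H \<inter> S) E \<le> chromatic_number H E" using chi_mono[OF sgH] by blast
        moreover have "int (card (H \<inter> S)) - 3 * int (chromatic_number (H \<inter> S) E) \<le> chromatic_excess S E"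
          using eta_ge[OF sg_fin[OF sgS], of "H \<inter> S" E] False by blast
        ultimately show ?thesis using H(3) by linarith
      qed
    qed
    have ineq: "4 * int (chromatic_number V E) \<le> 2 * int (clique_number V E) + 2 * int (max_degree V E) + 2
       + 5 * int (card K) - chromatic_excess V E"
      using J chiV omV DV etaV by linarith
    hence "4 * real (chromatic_number V E) \<le> 2 * real (clique_number V E) + 2 * real (max_degree V E) + 2
       + 5 * real (card K) - real_of_int (chromatic_excess V E)"
      by (metis (mono_tags, opaque_lifting) of_int_add of_int_diff of_int_le_iff of_int_mult of_int_numeral of_int_of_nat_eq)
    thus ?thesis using K(3) by (simp add: field_simps)
  qed
qed

end
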